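(* Let $\varepsilon\in(0,\tfrac12)$, $n\ge 0$, and let $W_n$ be the weighted diamond defined below. Then any shortest (weighted) path between two vertices of $W_n$ contains at most one edge of weight $1$, and for each $j\in\{1,\dots,n\}$ at most two edges of weight $(\tfrac12+\varepsilon)^j$.
   Context: Diamonds: $D_0$ is an edge; $D_i$ is obtained from $D_{i-1}$ by replacing each edge $uv$ by a quadrilateral $u,a,v,b$. Weighted diamonds: $W_0=D_0$ with its edge of weight $1$; for $n\ge1$, $W_n$ has vertex set $V(D_n)$ and edge set $E(W_{n-1})\cup E(D_n)$, where edges of $W_{n-1}$ keep their weights and each edge of $D_n$ gets weight $(\tfrac12+\varepsilon)^n$. The length of a path is the sum of the weights of its edges; a shortest path is one of minimal length between its endpoints. *)

theory Defs
  imports Complex_Main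
begin

text \<open>Vertices of the diamonds: the two original endpoints, and the vertices
  a (flag True) and b (flag False) created when an edge (u,v) is replaced by
  the quadrilateral u,a,v,b.\<close>
datatype dv = Src | Tgt | Mid dv dv bool

text \<open>Edge set of D_n (edges stored as ordered pairs, graph is undirected).\<close>
fun dE :: "nat \<Rightarrow> (dv \<times> dv) set" where
  "dE 0 = {(Src, Tgt)}"
| "dE (Suc n) = (\<Union>(u, v)\<in>dE n.
     {(u, Mid u v True), (Mid u v True, v), (u, Mid u v False), (Mid u v False, v)})"

definition dV :: "nat \<Rightarrow> dv set" where
  "dV n = fst ` dE n \<union> snd ` dE n"

text \<open>An edge of W_n, tagged with the level j such that it is an edge of D_j;
  its weight is (1/2+eps)^j. Steps (u,v,j) traverse such an edge from u to v.\<close>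
definition wedge :: "nat \<Rightarrow> dv \<times> dv \<times> nat \<Rightarrow> bool" where
  "wedge n e = (case e of (u, v, j) \<Rightarrow> j \<le> n \<and> ((u, v) \<in> dE j \<or> (v, u) \<in> dE j))"

fun wwalk :: "nat \<Rightarrow> dv \<Rightarrow> dv \<Rightarrow> (dv \<times> dv \<times> nat) list \<Rightarrow> bool" where
  "wwalk n x y [] = (x = y)"
| "wwalk n x y ((u, v, j) # ps) = (u = x \<and> wedge n (u, v, j) \<and> wwalk n v y ps)"

definition wpath :: "nat \<Rightarrow> dv \<Rightarrow> dv \<Rightarrow> (dv \<times> dv \<times> nat) list \<Rightarrow> bool" where
  "wpath n x y ps = (x \<in> dV n \<and> wwalk n x y ps \<and> distinct (x # map (\<lambda>e. fst (snd e)) ps))"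

definition plen :: "real \<Rightarrow> (dv \<times> dv \<times> nat) list \<Rightarrow> real" where
  "plen eps ps = sum_list (map (\<lambda>e. (1/2 + eps) ^ snd (snd e)) ps)"

definition shortest_path :: "real \<Rightarrow> nat \<Rightarrow> dv \<Rightarrow> dv \<Rightarrow> (dv \<times> dv \<times> nat) list \<Rightarrow> bool" where
  "shortest_path eps n x y ps =
     (wpath n x y ps \<and> (\<forall>qs. wpath n x y qs \<longrightarrow> plen eps ps \<le> plen eps qs))"

definition nlev :: "nat \<Rightarrow> (dv \<times> dv \<times> nat) list \<Rightarrow> nat" where
  "nlev j ps = length (filter (\<lambda>e. snd (snd e) = j) ps)"

end

theory Submission imports Defs begin

fun depth :: "dv \<Rightarrow> nat" where
  "depth Src = 0" | "depth Tgt = 0" | "depth (Mid u v f) = Suc (max (depth u) (depth v))"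

lemma dE_Suc_iff:
  "(p, q) \<in> dE (Suc n) \<longleftrightarrow> (\<exists>u v f. (u, v) \<in> dE n \<and> ((p, q) = (u, Mid u v f) \<or> (p, q) = (Mid u v f, v)))"
proof
  assume "(p, q) \<in> dE (Suc n)" then show "\<exists>u v f. (u, v) \<in> dE n \<and> ((p, q) = (u, Mid u v f) \<or> (p, q) = (Mid u v f, v))"
    by auto
next
  assume "\<exists>u v f. (u, v) \<in> dE n \<and> ((p, q) = (u, Mid u v f) \<or> (p, q) = (Mid u v f, v))"
  then obtain u v f where "(u, v) \<in> dE n" "(p, q) = (u, Mid u v f) \<or> (p, q) = (Mid u v f, v)" by blast
  then show "(p, q) \<in> dE (Suc n)" by (cases f) force+
qed

lemma dE_depth: "(p, q) \<in> dE j \<Longrightarrow> depth p \<le> j \<and> depth q \<le> j"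
proof (induction j arbitrary: p q)
  case 0 then show ?case by auto
next
  case (Suc j)
  then obtain u v f where "(u, v) \<in> dE j" "(p, q) = (u, Mid u v f) \<or> (p, q) = (Mid u v f, v)"
    using dE_Suc_iff by blast
  with Suc.IH[of u v] show ?case by auto
qed

lemma dE_lower: "(u, v) \<in> dE n \<Longrightarrow> n \<le> max (depth u) (depth v)"
proof (induction n arbitrary: u v)
  case 0 then show ?case by auto
next
  case (Suc n)
  then obtain a b f where "(a, b) \<in> dE n" "(u, v) = (a, Mid a b f) \<or> (u, v) = (Mid a b f, b)"
    using dE_Suc_iff by blast
  with Suc.IH[of a b] show ?case by auto
qed

lemma dV_depth: "v \<in> dV n \<Longrightarrow> depth v \<le> n"
  unfolding dV_def using dE_depth by force

lemma dV_mono_Suc: "dV n \<subseteq> dV (Suc n)"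
proof
  fix p assume "p \<in> dV n"
  then obtain q where "(p, q) \<in> dE n \<or> (q, p) \<in> dE n" unfolding dV_def by force
  then show "p \<in> dV (Suc n)"
  proof
    assume "(p, q) \<in> dE n"
    then have "(p, Mid p q True) \<in> dE (Suc n)" using dE_Suc_iff by blast
    then show ?thesis unfolding dV_def by force
  next
    assume "(q, p) \<in> dE n"
    then have "(Mid q p True, p) \<in> dE (Suc n)" using dE_Suc_iff by blast
    then show ?thesis unfolding dV_def by force
  qed
qed

lemma dV_mono: "j \<le> n \<Longrightarrow> dV j \<subseteq> dV n"
  using lift_Suc_mono_le[of dV, OF dV_mono_Suc] by blast

lemma dE_dV: "(u, v) \<in> dE j \<Longrightarrow> u \<in> dV j \<and> v \<in> dV j"
  unfolding dV_def by force

lemma wedge_dV: "wedge n (u, v, j) \<Longrightarrow> u \<in> dV n \<and> v \<in> dV n"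
proof -
  assume "wedge n (u, v, j)"
  then have "j \<le> n" "(u, v) \<in> dE j \<or> (v, u) \<in> dE j" unfolding wedge_def by auto
  then show ?thesis using dE_dV dV_mono[of j n] by blast
qed

lemma wedge_sym: "wedge n (u, v, j) = wedge n (v, u, j)"
  unfolding wedge_def by auto

lemma wwalk_append: "wwalk n x y (as @ bs) \<longleftrightarrow> (\<exists>z. wwalk n x z as \<and> wwalk n z y bs)"
  by (induction n x y as rule: wwalk.induct) auto

lemma wwalk_last: "wwalk n x z as \<Longrightarrow> z = last (x # map (\<lambda>e. fst (snd e)) as)"
  by (induction n x z as rule: wwalk.induct) auto

lemma wwalk_tgts: "wwalk n x y qs \<Longrightarrow> set (map (\<lambda>e. fst (snd e)) qs) \<subseteq> dV n"
  by (induction n x y qs rule: wwalk.induct) (auto dest: wedge_dV)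

lemma wwalk_levs: "wwalk n x y qs \<Longrightarrow> \<forall>e\<in>set qs. snd (snd e) \<le> n"
  by (induction n x y qs rule: wwalk.induct) (auto simp: wedge_def)

lemma wwalk_mono: "wwalk n x y qs \<Longrightarrow> n \<le> m \<Longrightarrow> wwalk m x y qs"
  by (induction n x y qs rule: wwalk.induct) (auto simp: wedge_def)

lemma wwalk_down: "wwalk m x y qs \<Longrightarrow> \<forall>e\<in>set qs. snd (snd e) \<le> n \<Longrightarrow> wwalk n x y qs"
  by (induction m x y qs rule: wwalk.induct) (auto simp: wedge_def)

lemma distinct_suffix: "wwalk m x z as \<Longrightarrow> distinct (x # map (\<lambda>e. fst (snd e)) (as @ bs)) \<Longrightarrow> distinct (z # map (\<lambda>e. fst (snd e)) bs)"
  by (induction m x z as rule: wwalk.induct) auto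

lemma plen_append: "plen eps (as @ bs) = plen eps as + plen eps bs"
  unfolding plen_def by simp

lemma plen_Cons: "plen eps (e # bs) = (1/2+eps) ^ snd (snd e) + plen eps bs"
  unfolding plen_def by simp

lemma deep_edge:
  assumes "wedge (Suc n) (a, w, j)" "n < depth w"
  shows "j = Suc n \<and> (\<exists>u v f. (u,v) \<in> dE n \<and> w = Mid u v f \<and> (a = u \<or> a = v))"
proof -
  from assms(1) have j: "j \<le> Suc n" and e: "(a,w) \<in> dE j \<or> (w,a) \<in> dE j" by (auto simp: wedge_def)
  from e have "depth w \<le> j" using dE_depth by blast
  with j assms(2) have jN: "j = Suc n" by linarith
  from e[unfolded jN] show ?thesis
  proof
    assume "(a,w) \<in> dE (Suc n)"
    then obtain u v f where uv: "(u,v) \<in> dE n" and c: "(a,w) = (u, Mid u v f) \<or> (a,w) = (Mid u v f, v)"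
      using dE_Suc_iff by blast
    have "(a,w) = (u, Mid u v f)" using c dE_depth[OF uv] assms(2) by auto
    then show ?thesis using uv jN by auto
  next
    assume "(w,a) \<in> dE (Suc n)"
    then obtain u v f where uv: "(u,v) \<in> dE n" and c: "(w,a) = (u, Mid u v f) \<or> (w,a) = (Mid u v f, v)"
      using dE_Suc_iff by blast
    have "(w,a) = (Mid u v f, v)" using c dE_depth[OF uv] assms(2) by auto
    then show ?thesis using uv jN by auto
  qed
qed

lemma wedge_deep: "wedge (Suc n) (a, b, Suc n) \<Longrightarrow> n < depth a \<or> n < depth b"
proof -
  assume "wedge (Suc n) (a, b, Suc n)"
  then have "(a,b) \<in> dE (Suc n) \<or> (b,a) \<in> dE (Suc n)" by (auto simp: wedge_def)
  then obtain u v f where uv: "(u,v) \<in> dE n" and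
    c: "a = Mid u v f \<or> b = Mid u v f" using dE_Suc_iff by blast
  from dE_lower[OF uv] have "n < depth (Mid u v f)" by simp
  with c show ?thesis by auto
qed

lemma no_deep_interior:
  assumes eps: "0 < eps" "eps < 1/2" and sp: "shortest_path eps (Suc n) x y ps"
    and ps: "ps = as @ (a, w, j1) # (w', b, j2) # bs" and deep: "n < depth w \<or> n < depth w'"
  shows False
proof -
  from sp have wp: "wpath (Suc n) x y ps" and mn: "\<And>qs. wpath (Suc n) x y qs \<Longrightarrow> plen eps ps \<le> plen eps qs"
    unfolding shortest_path_def by auto
  from wp have x: "x \<in> dV (Suc n)" and wk: "wwalk (Suc n) x y ps"
    and ds: "distinct (x # map (\<lambda>e. fst (snd e)) ps)" unfolding wpath_def by auto
  from wk[unfolded ps wwalk_append] obtain z where z1: "wwalk (Suc n) x z as"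
    and z2: "wwalk (Suc n) z y ((a, w, j1) # (w', b, j2) # bs)" by blast
  from z2 have za: "z = a" and e1: "wedge (Suc n) (a, w, j1)" and ww: "w' = w"
    and e2: "wedge (Suc n) (w, b, j2)" and wb: "wwalk (Suc n) b y bs" by auto
  have dw: "n < depth w" using deep ww by auto
  from deep_edge[OF e1 dw] obtain u v f where j1: "j1 = Suc n" and uv: "(u,v) \<in> dE n"
    and wm: "w = Mid u v f" and au: "a = u \<or> a = v" by blast
  from e2 have e2': "wedge (Suc n) (b, w, j2)" using wedge_sym by blast
  from deep_edge[OF e2' dw] obtain u2 v2 f2 where j2: "j2 = Suc n" and
    wm2: "w = Mid u2 v2 f2" and bu: "b = u2 \<or> b = v2" by blast
  from wm wm2 have "u2 = u" "v2 = v" by auto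
  with bu have bu': "b = u \<or> b = v" by auto
  have alast: "a = last (x # map (\<lambda>e. fst (snd e)) as)" using wwalk_last[OF z1] za by simp
  then have aset: "a \<in> set (x # map (\<lambda>e. fst (snd e)) as)" by (metis last_in_set list.distinct(1))
  from ds ps ww have ds': "distinct (x # map (\<lambda>e. fst (snd e)) as @ w # b # map (\<lambda>e. fst (snd e)) bs)" by simp
  then have "b \<notin> set (x # map (\<lambda>e. fst (snd e)) as)" by auto
  with aset have ab: "a \<noteq> b" by auto
  have eab: "wedge (Suc n) (a, b, n)" using au bu' ab uv unfolding wedge_def by auto
  define qs where "qs = as @ (a, b, n) # bs"
  have "wpath (Suc n) x y qs"
    unfolding wpath_def qs_def wwalk_append using x z1 za eab wb ds' by auto
  then have le: "plen eps ps \<le> plen eps qs" by (rule mn)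
  have "plen eps ps = plen eps as + (1/2+eps)^Suc n + (1/2+eps)^Suc n + plen eps bs"
    using ps j1 j2 by (simp add: plen_append plen_Cons)
  moreover have "plen eps qs = plen eps as + (1/2+eps)^n + plen eps bs"
    unfolding qs_def by (simp add: plen_append plen_Cons)
  ultimately have "2 * (1/2+eps)^Suc n \<le> (1/2+eps)^n" using le by simp
  then have "(1/2+eps)^n * (2*(1/2+eps) - 1) \<le> 0" by (simp add: algebra_simps)
  moreover have "(1/2+eps)^n > 0" using eps by simp
  moreover have "2*(1/2+eps) - 1 > 0" using eps by simp
  ultimately show False by (simp add: mult_le_0_iff)
qed

lemma levN_end:
  assumes eps: "0 < eps" "eps < 1/2" and sp: "shortest_path eps (Suc n) x y ps"
    and ps: "ps = as @ (a, b, Suc n) # bs"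
  shows "as = [] \<or> bs = []"
proof (rule ccontr)
  assume "\<not> (as = [] \<or> bs = [])"
  then have an: "as \<noteq> []" and bn: "bs \<noteq> []" by auto
  from sp have wk: "wwalk (Suc n) x y ps" unfolding shortest_path_def wpath_def by auto
  from wk[unfolded ps wwalk_append] obtain z where "wwalk (Suc n) z y ((a, b, Suc n) # bs)" by blast
  then have e: "wedge (Suc n) (a, b, Suc n)" by auto
  from wedge_deep[OF e] show False
  proof
    assume da: "n < depth a"
    from an obtain as' c1 c2 c3 where "as = as' @ [(c1, c2, c3)]"
      by (metis prod_cases3 rev_exhaust)
    then have "ps = as' @ (c1, c2, c3) # (a, b, Suc n) # bs" using ps by simp
    then show False using no_deep_interior[OF eps sp, of as' c1 c2 c3 a b "Suc n" bs] da by blast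
  next
    assume db: "n < depth b"
    from bn obtain bs' d1 d2 d3 where "bs = (d1, d2, d3) # bs'"
      by (metis prod_cases3 list.exhaust)
    then have "ps = as @ (a, b, Suc n) # (d1, d2, d3) # bs'" using ps by simp
    then show False using no_deep_interior[OF eps sp, of as a b "Suc n" d1 d2 d3 bs'] db by blast
  qed
qed

lemma split3:
  assumes "\<And>as s bs. ps = as @ s # bs \<Longrightarrow> P s \<Longrightarrow> as = [] \<or> bs = []"
  shows "\<exists>pre mid post. ps = pre @ mid @ post \<and> length pre \<le> 1 \<and> length post \<le> 1 \<and>
     (\<forall>e\<in>set pre. P e) \<and> (\<forall>e\<in>set post. P e) \<and> (\<forall>e\<in>set mid. \<not> P e)"
proof (cases ps)
  case Nil then show ?thesis by auto
next
  case (Cons e ps')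
  show ?thesis
  proof (cases ps')
    case Nil
    show ?thesis
    proof (cases "P e")
      case True then show ?thesis using Cons Nil by (intro exI[of _ "[e]"] exI[of _ "[]"]) auto
    next
      case False then show ?thesis using Cons Nil by (intro exI[of _ "[]"] exI[of _ "[e]"]) auto
    qed
  next
    case (Cons e2 ps2)
    then obtain rest l where psr: "ps' = rest @ [l]" by (metis list.distinct(1) rev_exhaust)
    have mid: "\<not> P s" if "s \<in> set rest" for s
    proof
      assume Ps: "P s"
      from that obtain r1 r2 where "rest = r1 @ s # r2" by (meson split_list)
      then have "ps = (e # r1) @ s # (r2 @ [l])" using \<open>ps = e # ps'\<close> psr by simp
      from assms[OF this Ps] show False by simp
    qed
    show ?thesis
      apply (rule exI[of _ "filter P [e]"], rule exI[of _ "filter (\<lambda>x. \<not> P x) [e] @ rest @ filter (\<lambda>x. \<not> P x) [l]"],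
          rule exI[of _ "filter P [l]"])
      using \<open>ps = e # ps'\<close> psr mid by auto
  qed
qed

lemma nlev_append: "nlev j (as @ bs) = nlev j as + nlev j bs"
  unfolding nlev_def by simp

lemma dV0: "dV 0 = {Src, Tgt}"
  unfolding dV_def by auto

lemma main:
  assumes eps: "0 < eps" "eps < 1/2"
  shows "shortest_path eps n x y ps \<Longrightarrow> nlev 0 ps \<le> 1 \<and> (\<forall>j\<in>{1..n}. nlev j ps \<le> 2)"
proof (induction n arbitrary: x y ps)
  case 0
  then have x: "x \<in> dV 0" and wk: "wwalk 0 x y ps" and ds: "distinct (x # map (\<lambda>e. fst (snd e)) ps)"
    unfolding shortest_path_def wpath_def by auto
  have "set (x # map (\<lambda>e. fst (snd e)) ps) \<subseteq> {Src, Tgt}" using x wwalk_tgts[OF wk] dV0 by auto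
  then have "card (set (x # map (\<lambda>e. fst (snd e)) ps)) \<le> card {Src, Tgt}" by (intro card_mono) auto
  moreover have "card (set (x # map (\<lambda>e. fst (snd e)) ps)) = length (x # map (\<lambda>e. fst (snd e)) ps)"
    by (rule distinct_card[OF ds])
  ultimately have "length (x # map (\<lambda>e. fst (snd e)) ps) \<le> 2" by simp
  then have "length ps \<le> 1" by simp
  moreover have "nlev 0 ps \<le> length ps" unfolding nlev_def by simp
  ultimately show ?case by simp
next
  case (Suc n)
  note sp = Suc.prems
  from sp have x: "x \<in> dV (Suc n)" and wk: "wwalk (Suc n) x y ps" and ds: "distinct (x # map (\<lambda>e. fst (snd e)) ps)"
    and mn: "\<And>qs. wpath (Suc n) x y qs \<Longrightarrow> plen eps ps \<le> plen eps qs"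
    unfolding shortest_path_def wpath_def by auto
  have "\<exists>pre mid post. ps = pre @ mid @ post \<and> length pre \<le> 1 \<and> length post \<le> 1 \<and>
     (\<forall>e\<in>set pre. snd (snd e) = Suc n) \<and> (\<forall>e\<in>set post. snd (snd e) = Suc n) \<and> (\<forall>e\<in>set mid. \<not> snd (snd e) = Suc n)"
  proof (rule split3)
    fix as s bs assume "ps = as @ s # bs" "snd (snd s) = Suc n"
    then show "as = [] \<or> bs = []" using levN_end[OF eps sp, of as "fst s" "fst (snd s)" bs] by (cases s) auto
  qed
  then obtain pre mid post where ps: "ps = pre @ mid @ post" and lpre: "length pre \<le> 1" and lpost: "length post \<le> 1"
    and Lpre: "\<forall>e\<in>set pre. snd (snd e) = Suc n" and Lpost: "\<forall>e\<in>set post. snd (snd e) = Suc n"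
    and Lmid: "\<forall>e\<in>set mid. snd (snd e) \<noteq> Suc n" by blast
  from wk[unfolded ps wwalk_append] obtain x' y' where w1: "wwalk (Suc n) x x' pre"
    and w2: "wwalk (Suc n) x' y' mid" and w3: "wwalk (Suc n) y' y post" by blast
  have Lmid': "\<forall>e\<in>set mid. snd (snd e) \<le> n" using Lmid wwalk_levs[OF w2] by fastforce
  have wm: "wwalk n x' y' mid" using wwalk_down[OF w2 Lmid'] .
  have n0pre: "nlev j pre = 0" if "j \<noteq> Suc n" for j
    using Lpre that unfolding nlev_def by (auto simp: filter_empty_conv)
  have n0post: "nlev j post = 0" if "j \<noteq> Suc n" for j
    using Lpost that unfolding nlev_def by (auto simp: filter_empty_conv)
  have n0mid: "nlev (Suc n) mid = 0"
    using Lmid unfolding nlev_def by (auto simp: filter_empty_conv)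
  have nNpre: "nlev j pre \<le> 1" for j using lpre unfolding nlev_def by (meson le_trans length_filter_le)
  have nNpost: "nlev j post \<le> 1" for j using lpost unfolding nlev_def by (meson le_trans length_filter_le)
  have cnt: "nlev j ps = nlev j pre + nlev j mid + nlev j post" for j
    unfolding ps nlev_append by simp
  show ?case
  proof (cases "mid = []")
    case True
    then have "nlev j mid = 0" for j unfolding nlev_def by simp
    then show ?thesis
    proof -
      have "nlev 0 ps \<le> 1" using cnt[of 0] n0pre[of 0] n0post[of 0] \<open>\<And>j. nlev j mid = 0\<close> by simp
      moreover have "nlev j ps \<le> 2" if "j \<in> {1..Suc n}" for j
      proof (cases "j = Suc n")
        case True then show ?thesis using cnt[of j] nNpre[of j] nNpost[of j] \<open>\<And>j. nlev j mid = 0\<close> by simp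
      next
        case False then show ?thesis using cnt[of j] n0pre[OF False] n0post[OF False] \<open>\<And>j. nlev j mid = 0\<close> by simp
      qed
      ultimately show ?thesis by blast
    qed
  next
    case False
    then obtain m1 mrest where mcons: "mid = m1 # mrest" by (cases mid) auto
    have x'V: "x' \<in> dV n" using wm mcons by (cases m1) (auto dest: wedge_dV)
    have midV: "set (x' # map (\<lambda>e. fst (snd e)) mid) \<subseteq> dV n" using x'V wwalk_tgts[OF wm] by auto
    have y'V: "y' \<in> dV n" using wwalk_last[OF wm] midV by (metis last_in_set list.distinct(1) subsetD)
    have dmid: "distinct (x' # map (\<lambda>e. fst (snd e)) mid)"
      using distinct_suffix[OF w1, of "mid @ post"] ds ps by simp
    define L1 where "L1 = butlast (x # map (\<lambda>e. fst (snd e)) pre)"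
    have L1eq: "x # map (\<lambda>e. fst (snd e)) pre = L1 @ [x']"
      unfolding L1_def using wwalk_last[OF w1] by (metis append_butlast_last_id list.distinct(1))
    have L1deep: "\<forall>v\<in>set L1. n < depth v"
    proof (cases pre)
      case Nil then show ?thesis unfolding L1_def by simp
    next
      case (Cons p pr)
      with lpre have pre1: "pre = [p]" by simp
      obtain p1 p2 p3 where p: "p = (p1, p2, p3)" by (cases p)
      from w1 pre1 p have "p1 = x" "p2 = x'" "wedge (Suc n) (p1, p2, p3)" by auto
      moreover have "p3 = Suc n" using Lpre pre1 p by simp
      ultimately have "n < depth x \<or> n < depth x'" using wedge_deep by blast
      moreover have "depth x' \<le> n" using dV_depth[OF x'V] .
      ultimately show ?thesis unfolding L1_def using pre1 by auto
    qed
    have L3deep: "\<forall>v\<in>set (map (\<lambda>e. fst (snd e)) post). n < depth v"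
    proof (cases post)
      case Nil then show ?thesis by simp
    next
      case (Cons p pr)
      with lpost have post1: "post = [p]" by simp
      obtain p1 p2 p3 where p: "p = (p1, p2, p3)" by (cases p)
      from w3 post1 p have "p1 = y'" "p2 = y" "wedge (Suc n) (p1, p2, p3)" by auto
      moreover have "p3 = Suc n" using Lpost post1 p by simp
      ultimately have "n < depth y' \<or> n < depth y" using wedge_deep by blast
      moreover have "depth y' \<le> n" using dV_depth[OF y'V] .
      ultimately show ?thesis using post1 p \<open>p2 = y\<close> by auto
    qed
    have dsplit: "distinct (L1 @ (x' # map (\<lambda>e. fst (snd e)) mid) @ map (\<lambda>e. fst (snd e)) post)"
    proof -
      have "L1 @ (x' # map (\<lambda>e. fst (snd e)) mid) @ map (\<lambda>e. fst (snd e)) post = x # map (\<lambda>e. fst (snd e)) (pre @ mid @ post)"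
        using L1eq by simp
      then show ?thesis using ds ps by metis
    qed
    have spm: "shortest_path eps n x' y' mid"
      unfolding shortest_path_def
    proof (intro conjI allI impI)
      show "wpath n x' y' mid" unfolding wpath_def using x'V wm dmid by simp
    next
      fix qs assume wq: "wpath n x' y' qs"
      then have wqk: "wwalk n x' y' qs" and dq: "distinct (x' # map (\<lambda>e. fst (snd e)) qs)"
        unfolding wpath_def by auto
      have qV: "set (x' # map (\<lambda>e. fst (snd e)) qs) \<subseteq> dV n" using x'V wwalk_tgts[OF wqk] by auto
      have qnd: "\<forall>v\<in>set (x' # map (\<lambda>e. fst (snd e)) qs). \<not> n < depth v" using qV dV_depth by fastforce
      have "distinct (L1 @ (x' # map (\<lambda>e. fst (snd e)) qs) @ map (\<lambda>e. fst (snd e)) post)"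
      proof -
        have "distinct L1" "distinct (map (\<lambda>e. fst (snd e)) post)"
          "set L1 \<inter> set (map (\<lambda>e. fst (snd e)) post) = {}" using dsplit by auto
        moreover have "set (x' # map (\<lambda>e. fst (snd e)) qs) \<inter> set L1 = {}" using qnd L1deep by blast
        moreover have "set (x' # map (\<lambda>e. fst (snd e)) qs) \<inter> set (map (\<lambda>e. fst (snd e)) post) = {}"
          using qnd L3deep by blast
        ultimately show ?thesis using dq by auto
      qed
      moreover have "L1 @ (x' # map (\<lambda>e. fst (snd e)) qs) @ map (\<lambda>e. fst (snd e)) post = x # map (\<lambda>e. fst (snd e)) (pre @ qs @ post)"
        using L1eq by simp
      ultimately have "distinct (x # map (\<lambda>e. fst (snd e)) (pre @ qs @ post))" by metis
      moreover have "wwalk (Suc n) x y (pre @ qs @ post)"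
        unfolding wwalk_append using w1 w3 wwalk_mono[OF wqk, of "Suc n"] by auto
      ultimately have "wpath (Suc n) x y (pre @ qs @ post)" unfolding wpath_def using x by simp
      from mn[OF this] show "plen eps mid \<le> plen eps qs" unfolding ps by (simp add: plen_append)
    qed
    from Suc.IH[OF spm] have ih: "nlev 0 mid \<le> 1" "\<forall>j\<in>{1..n}. nlev j mid \<le> 2" by auto
    have "nlev 0 ps \<le> 1" using cnt[of 0] n0pre[of 0] n0post[of 0] ih(1) by simp
    moreover have "nlev j ps \<le> 2" if "j \<in> {1..Suc n}" for j
    proof (cases "j = Suc n")
      case True then show ?thesis using cnt[of j] n0mid nNpre[of j] nNpost[of j] by simp
    next
      case False
      then have "j \<in> {1..n}" using that by auto
      then show ?thesis using cnt[of j] n0pre[OF False] n0post[OF False] ih(2) by simp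
    qed
    ultimately show ?thesis by blast
  qed
qed

theorem claimC:
  fixes eps :: real and n :: nat and x y :: dv and ps :: "(dv \<times> dv \<times> nat) list"
  assumes "0 < eps" and "eps < 1/2"
    and "shortest_path eps n x y ps"
  shows "nlev 0 ps \<le> 1 \<and> (\<forall>j\<in>{1..n}. nlev j ps \<le> 2)"
  using main[OF assms(1,2) assms(3)] .

end
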